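(* Let $(X,\leq)$ be a continuous dcpo and $p$ a partial metric on $X$ such that $\leq$ coincides with $\leq_p$. Then the following are equivalent: (1) $\mathcal O_p(X)\subseteq\mathcal O_\sigma(X)$; (2) open $p$-balls are finitely accessible, i.e. for every open ball $B^p_\epsilon(x)$ and every $y\in B^p_\epsilon(x)$ there is $y'\ll y$ with $y'\in B^p_\epsilon(x)$; (3) $p$ is Scott-continuous as a map into $([0,+\infty],\geq)$, i.e. for all $x\in X$ and all directed $\Delta\subseteq X$, $p(x,\bigvee\Delta)=\inf_{d\in\Delta}p(x,d)$.
   Context: A partial metric (PM) on $X$ is $p:X\times X\to[0,+\infty]$ with, for all $x,y,z$: $p(x,x)\leq p(x,y)$; if $p(x,x)=p(x,y)=p(y,y)$ then $x=y$; $p(x,y)=p(y,x)$; $p(x,y)\leq p(x,z)+p(z,y)-p(z,z)$. Its order: $x\leq_p y$ iff $p(x,y)\leq p(x,x)$. Open balls $B^p_\epsilon(x)=\{y\mid p(y,x)<p(x,x)+\epsilon\}$; $\mathcal O_p(X)$ is the topology of unions of open balls. In a dcpo, $x\ll y$ iff for every directed $\Delta$ with $y\leq\bigvee\Delta$ there is $d\in\Delta$ with $x\leq d$; a basis is $B\subseteq X$ such that for each $x$ the set $\{y\in B\mid y\ll x\}$ is directed with join $x$; a dcpo is continuous if it has a basis. $\mathcal O_\sigma(X)$ (Scott topology) consists of upper sets $U$ such that $x\in U$ implies $y\in U$ for some $y\ll x$. *)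

theory Defs
  imports "HOL-Library.Extended_Nonnegative_Real"
begin

text \<open>The triangle law p(x,y) \<le> p(x,z) + p(z,y) - p(z,z) is written additively,
  p(x,y) + p(z,z) \<le> p(x,z) + p(z,y), the standard form for extended values.\<close>
definition partial_metric :: "'a set \<Rightarrow> ('a \<Rightarrow> 'a \<Rightarrow> ennreal) \<Rightarrow> bool" where
  "partial_metric X p \<longleftrightarrow>
     (\<forall>x\<in>X. \<forall>y\<in>X. p x x \<le> p x y) \<and>
     (\<forall>x\<in>X. \<forall>y\<in>X. p x x = p x y \<and> p x y = p y y \<longrightarrow> x = y) \<and>
     (\<forall>x\<in>X. \<forall>y\<in>X. p x y = p y x) \<and>
     (\<forall>x\<in>X. \<forall>y\<in>X. \<forall>z\<in>X. p x y + p z z \<le> p x z + p z y)"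

definition pm_le :: "('a \<Rightarrow> 'a \<Rightarrow> ennreal) \<Rightarrow> 'a \<Rightarrow> 'a \<Rightarrow> bool" where
  "pm_le p x y \<longleftrightarrow> p x y \<le> p x x"

definition pm_ball :: "'a set \<Rightarrow> ('a \<Rightarrow> 'a \<Rightarrow> ennreal) \<Rightarrow> 'a \<Rightarrow> real \<Rightarrow> 'a set" where
  "pm_ball X p x \<epsilon> = {y\<in>X. p y x < p x x + ennreal \<epsilon>}"

definition pm_open :: "'a set \<Rightarrow> ('a \<Rightarrow> 'a \<Rightarrow> ennreal) \<Rightarrow> 'a set \<Rightarrow> bool" where
  "pm_open X p U \<longleftrightarrow>
     (\<exists>S. S \<subseteq> {pm_ball X p x \<epsilon> | x \<epsilon>. x \<in> X \<and> \<epsilon> > 0} \<and> U = \<Union>S)"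

definition partial_order_on' :: "'a set \<Rightarrow> ('a \<Rightarrow> 'a \<Rightarrow> bool) \<Rightarrow> bool" where
  "partial_order_on' X le \<longleftrightarrow>
     (\<forall>x\<in>X. le x x) \<and>
     (\<forall>x\<in>X. \<forall>y\<in>X. le x y \<and> le y x \<longrightarrow> x = y) \<and>
     (\<forall>x\<in>X. \<forall>y\<in>X. \<forall>z\<in>X. le x y \<and> le y z \<longrightarrow> le x z)"

definition directed_in :: "'a set \<Rightarrow> ('a \<Rightarrow> 'a \<Rightarrow> bool) \<Rightarrow> 'a set \<Rightarrow> bool" where
  "directed_in X le D \<longleftrightarrow> D \<subseteq> X \<and> D \<noteq> {} \<and>
     (\<forall>a\<in>D. \<forall>b\<in>D. \<exists>c\<in>D. le a c \<and> le b c)"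

definition is_lub_in :: "'a set \<Rightarrow> ('a \<Rightarrow> 'a \<Rightarrow> bool) \<Rightarrow> 'a set \<Rightarrow> 'a \<Rightarrow> bool" where
  "is_lub_in X le D s \<longleftrightarrow> s \<in> X \<and> (\<forall>d\<in>D. le d s) \<and>
     (\<forall>u\<in>X. (\<forall>d\<in>D. le d u) \<longrightarrow> le s u)"

definition dcpo_on :: "'a set \<Rightarrow> ('a \<Rightarrow> 'a \<Rightarrow> bool) \<Rightarrow> bool" where
  "dcpo_on X le \<longleftrightarrow> partial_order_on' X le \<and>
     (\<forall>D. directed_in X le D \<longrightarrow> (\<exists>s. is_lub_in X le D s))"

definition way_below :: "'a set \<Rightarrow> ('a \<Rightarrow> 'a \<Rightarrow> bool) \<Rightarrow> 'a \<Rightarrow> 'a \<Rightarrow> bool" where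
  "way_below X le x y \<longleftrightarrow>
     (\<forall>D s. directed_in X le D \<and> is_lub_in X le D s \<and> le y s \<longrightarrow> (\<exists>d\<in>D. le x d))"

definition is_basis :: "'a set \<Rightarrow> ('a \<Rightarrow> 'a \<Rightarrow> bool) \<Rightarrow> 'a set \<Rightarrow> bool" where
  "is_basis X le B \<longleftrightarrow> B \<subseteq> X \<and>
     (\<forall>x\<in>X. directed_in X le {y\<in>B. way_below X le y x} \<and>
             is_lub_in X le {y\<in>B. way_below X le y x} x)"

definition continuous_dcpo :: "'a set \<Rightarrow> ('a \<Rightarrow> 'a \<Rightarrow> bool) \<Rightarrow> bool" where
  "continuous_dcpo X le \<longleftrightarrow> dcpo_on X le \<and> (\<exists>B. is_basis X le B)"

text \<open>Scott-open sets, as defined in the paper for continuous dcpos.\<close>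
definition scott_open :: "'a set \<Rightarrow> ('a \<Rightarrow> 'a \<Rightarrow> bool) \<Rightarrow> 'a set \<Rightarrow> bool" where
  "scott_open X le U \<longleftrightarrow> U \<subseteq> X \<and>
     (\<forall>x\<in>U. \<forall>y\<in>X. le x y \<longrightarrow> y \<in> U) \<and>
     (\<forall>x\<in>U. \<exists>y\<in>U. way_below X le y x)"

end

theory Submission
  imports Defs
begin

lemma pm_antitone:
  assumes pm: "partial_metric X p" and x: "x \<in> X" and y: "y \<in> X" and z: "z \<in> X"
    and le: "pm_le p x y"
  shows "p z y \<le> p z x"
proof -
  have tri: "p z y + p x x \<le> p z x + p x y" using pm x y z unfolding partial_metric_def by blast
  have eq: "p x y = p x x" using pm x y le unfolding partial_metric_def pm_le_def
    by (meson antisym)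
  show ?thesis
  proof (cases "p x x = \<infinity>")
    case True
    have "p x x \<le> p x z" using pm x z unfolding partial_metric_def by blast
    moreover have "p x z = p z x" using pm x z unfolding partial_metric_def by blast
    ultimately show ?thesis using True by (simp add: top_unique)
  next
    case False
    from tri eq have "p x x + p z y \<le> p x x + p z x" by (simp add: add.commute)
    then show ?thesis using False ennreal_add_left_cancel_le by blast
  qed
qed

lemma ball_upper:
  assumes pm: "partial_metric X p" and x: "x \<in> X"
    and "y \<in> pm_ball X p x e" and "y' \<in> X" and "pm_le p y y'"
  shows "y' \<in> pm_ball X p x e"
proof -
  have "y \<in> X" "p y x < p x x + ennreal e" using assms(3) unfolding pm_ball_def by auto
  moreover have "p x y' \<le> p x y" using pm_antitone[OF pm \<open>y \<in> X\<close> \<open>y' \<in> X\<close> x] assms(5) by blast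
  moreover have "p x y' = p y' x" "p x y = p y x" using pm x \<open>y \<in> X\<close> \<open>y' \<in> X\<close>
    unfolding partial_metric_def by auto
  ultimately show ?thesis using \<open>y' \<in> X\<close> unfolding pm_ball_def by auto
qed

lemma ball_scott:
  assumes pm: "partial_metric X p" and leq: "\<forall>x\<in>X. \<forall>y\<in>X. le x y \<longleftrightarrow> pm_le p x y"
    and x: "x \<in> X"
    and fa: "\<forall>y\<in>pm_ball X p x e. \<exists>y'\<in>X. way_below X le y' y \<and> y' \<in> pm_ball X p x e"
  shows "scott_open X le (pm_ball X p x e)"
  unfolding scott_open_def
proof (intro conjI ballI impI)
  show "pm_ball X p x e \<subseteq> X" unfolding pm_ball_def by auto
next
  fix y y' assume "y \<in> pm_ball X p x e" "y' \<in> X" "le y y'"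
  moreover have "y \<in> X" using \<open>y \<in> pm_ball X p x e\<close> unfolding pm_ball_def by auto
  ultimately show "y' \<in> pm_ball X p x e" using ball_upper[OF pm x] leq by blast
next
  fix y assume "y \<in> pm_ball X p x e"
  then show "\<exists>y'\<in>pm_ball X p x e. way_below X le y' y" using fa by blast
qed

theorem mainTheorem5:
  fixes X :: "'a set" and le :: "'a \<Rightarrow> 'a \<Rightarrow> bool" and p :: "'a \<Rightarrow> 'a \<Rightarrow> ennreal"
  assumes "continuous_dcpo X le"
    and "partial_metric X p"
    and "\<forall>x\<in>X. \<forall>y\<in>X. le x y \<longleftrightarrow> pm_le p x y"
  shows "((\<forall>U. pm_open X p U \<longrightarrow> scott_open X le U) \<longleftrightarrow>
          (\<forall>x\<in>X. \<forall>\<epsilon>::real. \<epsilon> > 0 \<longrightarrow> (\<forall>y\<in>pm_ball X p x \<epsilon>.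
              \<exists>y'\<in>X. way_below X le y' y \<and> y' \<in> pm_ball X p x \<epsilon>))) \<and>
         ((\<forall>x\<in>X. \<forall>\<epsilon>::real. \<epsilon> > 0 \<longrightarrow> (\<forall>y\<in>pm_ball X p x \<epsilon>.
              \<exists>y'\<in>X. way_below X le y' y \<and> y' \<in> pm_ball X p x \<epsilon>)) \<longleftrightarrow>
          (\<forall>x\<in>X. \<forall>D s. directed_in X le D \<and> is_lub_in X le D s \<longrightarrow>
              p x s = (INF d\<in>D. p x d)))"
  (is "(?A \<longleftrightarrow> ?B) \<and> (?B \<longleftrightarrow> ?C)")
proof -
  note pm = assms(2) and leq = assms(3)
  have symm: "\<And>a b. a \<in> X \<Longrightarrow> b \<in> X \<Longrightarrow> p a b = p b a"
    using pm unfolding partial_metric_def by blast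
  have AB: "?A \<Longrightarrow> ?B"
  proof (intro ballI allI impI)
    fix x e y assume A: ?A and x: "x \<in> X" and e: "(0::real) < e" and y: "y \<in> pm_ball X p x e"
    have "pm_open X p (pm_ball X p x e)" unfolding pm_open_def
      by (rule exI[of _ "{pm_ball X p x e}"]) (use x e in auto)
    then have "scott_open X le (pm_ball X p x e)" using A by blast
    then obtain y' where "y' \<in> pm_ball X p x e" "way_below X le y' y"
      using y unfolding scott_open_def by blast
    then show "\<exists>y'\<in>X. way_below X le y' y \<and> y' \<in> pm_ball X p x e"
      unfolding pm_ball_def by auto
  qed
  have BA: "?B \<Longrightarrow> ?A"
  proof (intro allI impI)
    fix U assume B: ?B and U: "pm_open X p U"
    then obtain S where S: "S \<subseteq> {pm_ball X p x \<epsilon> | x \<epsilon>. x \<in> X \<and> \<epsilon> > 0}" "U = \<Union>S"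
      unfolding pm_open_def by blast
    have so: "\<And>V. V \<in> S \<Longrightarrow> scott_open X le V"
    proof -
      fix V assume "V \<in> S"
      then obtain x e where "V = pm_ball X p x e" "x \<in> X" "e > 0" using S by blast
      then show "scott_open X le V" using ball_scott[OF pm leq] B by blast
    qed
    show "scott_open X le U" unfolding scott_open_def S(2)
    proof (intro conjI ballI impI)
      show "\<Union>S \<subseteq> X" using so unfolding scott_open_def by blast
    next
      fix a b assume "a \<in> \<Union>S" "b \<in> X" "le a b"
      then show "b \<in> \<Union>S" using so unfolding scott_open_def by blast
    next
      fix a assume "a \<in> \<Union>S"
      then obtain V where "V \<in> S" "a \<in> V" by blast
      then obtain y where "y \<in> V" "way_below X le y a" using so unfolding scott_open_def by blast
      then show "\<exists>y\<in>\<Union>S. way_below X le y a" using \<open>V \<in> S\<close> by blast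
    qed
  qed
  have CB: "?C \<Longrightarrow> ?B"
  proof (intro ballI allI impI)
    fix x e y assume C: ?C and x: "x \<in> X" and e: "(0::real) < e" and y: "y \<in> pm_ball X p x e"
    from y have yX: "y \<in> X" and py: "p y x < p x x + ennreal e" unfolding pm_ball_def by auto
    obtain B where B: "is_basis X le B" using assms(1) unfolding continuous_dcpo_def by blast
    define D where "D = {b\<in>B. way_below X le b y}"
    have D: "directed_in X le D" "is_lub_in X le D y" using B yX unfolding is_basis_def D_def by auto
    have "p x y = (INF d\<in>D. p x d)" using C x D by blast
    then have "(INF d\<in>D. p x d) < p x x + ennreal e" using py symm[OF x yX] by simp
    then obtain d where d: "d \<in> D" "p x d < p x x + ennreal e" by (auto simp: INF_less_iff)
    have dX: "d \<in> X" using D(1) d(1) unfolding directed_in_def by blast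
    show "\<exists>y'\<in>X. way_below X le y' y \<and> y' \<in> pm_ball X p x e"
      using d dX symm[OF x dX] unfolding D_def pm_ball_def by auto
  qed
  have BC: "?B \<Longrightarrow> ?C"
  proof (intro ballI allI impI)
    fix x D s assume B: ?B and x: "x \<in> X" and Ds: "directed_in X le D \<and> is_lub_in X le D s"
    have sX: "s \<in> X" and ub: "\<forall>d\<in>D. le d s" using Ds unfolding is_lub_in_def by auto
    have DX: "D \<subseteq> X" using Ds unfolding directed_in_def by auto
    have le1: "p x s \<le> (INF d\<in>D. p x d)"
    proof (rule INF_greatest)
      fix d assume "d \<in> D"
      then show "p x s \<le> p x d" using pm_antitone[OF pm _ sX x] ub leq DX sX by blast
    qed
    show "p x s = (INF d\<in>D. p x d)"
    proof (rule ccontr)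
      assume "p x s \<noteq> (INF d\<in>D. p x d)"
      then have lt: "p x s < (INF d\<in>D. p x d)" using le1 by simp
      obtain c where c: "p x s < c" "c < (INF d\<in>D. p x d)" using dense[OF lt] by blast
      have "c < top" using c(2) by (simp add: less_le_trans)
      then obtain c' where c': "c = ennreal c'" "c' \<ge> 0" using less_top_ennreal by blast
      have pxx: "p x x \<le> p x s" using pm x sX unfolding partial_metric_def by blast
      then have "p x x < top" using c \<open>c < top\<close> by (meson le_less_trans less_trans)
      then obtain r where r: "p x x = ennreal r" "r \<ge> 0" using less_top_ennreal by blast
      have "ennreal r < ennreal c'" using r c c' pxx by (metis le_less_trans)
      then have rc: "r < c'" using r(2) by (simp add: ennreal_less_iff)
      define e where "e = c' - r"
      have e: "e > 0" using rc e_def by simp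
      have "ennreal r + ennreal e = ennreal (r + e)"
        using r(2) e by (intro ennreal_plus[symmetric]) auto
      then have sum: "p x x + ennreal e = c" using r(1) c'(1) e_def by simp
      have sb: "s \<in> pm_ball X p x e" unfolding pm_ball_def using sX c(1) sum symm[OF x sX] by simp
      obtain y' where y': "y' \<in> X" "way_below X le y' s" "y' \<in> pm_ball X p x e"
        using B[rule_format, OF x e sb] by blast
      have "pm_le p s s" unfolding pm_le_def by (rule order_refl)
      then have "le s s" using leq sX by blast
      then obtain d where d: "d \<in> D" "le y' d" using y'(2) Ds unfolding way_below_def by blast
      have dX: "d \<in> X" using d(1) DX by blast
      have "pm_le p y' d" using leq y'(1) dX d(2) by blast
      then have h1: "p x d \<le> p x y'" by (rule pm_antitone[OF pm y'(1) dX x])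
      have h2: "p x y' < c" using y'(3) symm[OF x y'(1)] sum unfolding pm_ball_def by simp
      have "(INF d\<in>D. p x d) \<le> p x d" by (rule INF_lower) (rule d(1))
      then have h3: "c < p x d" using c(2) by (rule less_le_trans[rotated])
      have "p x d < c" using h1 h2 by (rule le_less_trans)
      then show False using h3 by simp
    qed
  qed
  show ?thesis using AB BA BC CB by blast
qed

end
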